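(* Let $n\ge 2$ and $A=(A_1,\dots,A_n)\in V_n$. If $A$ is similar to an upper triangular $n$-matrix, then $\sigma_{jk}(A)=0$ for all distinct $1\le j,k\le n$.
   Context: $V_n=(M_{2\times2}(\mathbb{C}))^{\times n}$ with $GL(2,\mathbb{C})$ acting by simultaneous conjugation $g\cdot A=(gA_1g^{-1},\dots,gA_ng^{-1})$; two elements are similar if they lie in the same orbit. $A$ is an upper triangular $n$-matrix if every $A_j$ is upper triangular. With $t_j=\mathsf{tr}(A_j)$, $t_{jk}=\mathsf{tr}(A_jA_k)$, define $\tau_{jk}=t_{jk}-\tfrac12 t_jt_k$ and $\sigma_{jk}=\tau_{jk}^2-\tau_{jj}\tau_{kk}$. *)

theory Defs
  imports "HOL-Analysis.Analysis"
begin

type_synonym mat2 = "complex^2^2"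

text \<open>An n-tuple (A_1,...,A_n) of 2x2 complex matrices, represented as a function on
  indices, of which only 1..n are relevant.\<close>

definition mtr :: "mat2 \<Rightarrow> complex" where
  "mtr M = (\<Sum>i\<in>UNIV. M $ i $ i)"

definition upper_tri2 :: "mat2 \<Rightarrow> bool" where
  "upper_tri2 M \<longleftrightarrow> M $ 2 $ 1 = 0"

definition upper_triangular_tuple :: "nat \<Rightarrow> (nat \<Rightarrow> mat2) \<Rightarrow> bool" where
  "upper_triangular_tuple n A \<longleftrightarrow> (\<forall>j\<in>{1..n}. upper_tri2 (A j))"

definition similar_tuple :: "nat \<Rightarrow> (nat \<Rightarrow> mat2) \<Rightarrow> (nat \<Rightarrow> mat2) \<Rightarrow> bool" where
  "similar_tuple n A B \<longleftrightarrow>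
     (\<exists>g. invertible g \<and> (\<forall>j\<in>{1..n}. B j = g ** A j ** matrix_inv g))"

definition t1 :: "(nat \<Rightarrow> mat2) \<Rightarrow> nat \<Rightarrow> complex" where
  "t1 A j = mtr (A j)"

definition t2 :: "(nat \<Rightarrow> mat2) \<Rightarrow> nat \<Rightarrow> nat \<Rightarrow> complex" where
  "t2 A j k = mtr (A j ** A k)"

definition tau :: "(nat \<Rightarrow> mat2) \<Rightarrow> nat \<Rightarrow> nat \<Rightarrow> complex" where
  "tau A j k = t2 A j k - (1/2) * t1 A j * t1 A k"

definition sigma :: "(nat \<Rightarrow> mat2) \<Rightarrow> nat \<Rightarrow> nat \<Rightarrow> complex" where
  "sigma A j k = (tau A j k)^2 - tau A j j * tau A k k"

end

theory Submission
  imports Defs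
begin

lemma mtr_trace: "mtr M = trace M"
  by (simp add: mtr_def trace_def)

lemma inv_props:
  fixes g :: mat2
  assumes "invertible g"
  shows "g ** matrix_inv g = mat 1" "matrix_inv g ** g = mat 1"
proof -
  have "\<exists>A'. g ** A' = mat 1 \<and> A' ** g = mat 1" using assms by (simp add: invertible_def)
  from someI_ex[OF this] show "g ** matrix_inv g = mat 1" "matrix_inv g ** g = mat 1"
    by (simp_all add: matrix_inv_def)
qed

lemma mtr_conj:
  fixes g M :: mat2
  assumes "invertible g"
  shows "mtr (g ** M ** matrix_inv g) = mtr M"
proof -
  have "mtr (g ** M ** matrix_inv g) = trace (matrix_inv g ** (g ** M))"
    unfolding mtr_trace by (rule trace_mul_sym)
  also have "\<dots> = trace M"
    by (simp only: matrix_mul_assoc inv_props[OF assms] matrix_mul_lid)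
  finally show ?thesis by (simp add: mtr_trace)
qed

lemma mtr_conj2:
  fixes g M N :: mat2
  assumes "invertible g"
  shows "mtr ((g ** M ** matrix_inv g) ** (g ** N ** matrix_inv g)) = mtr (M ** N)"
proof -
  have "(g ** M ** matrix_inv g) ** (g ** N ** matrix_inv g) = g ** (M ** N) ** matrix_inv g"
  proof -
    have "(g ** M ** matrix_inv g) ** (g ** N ** matrix_inv g)
        = g ** M ** (matrix_inv g ** g) ** N ** matrix_inv g"
      by (simp only: matrix_mul_assoc)
    also have "\<dots> = g ** (M ** N) ** matrix_inv g"
      by (simp only: inv_props[OF assms] matrix_mul_rid matrix_mul_assoc)
    finally show ?thesis .
  qed
  then show ?thesis using mtr_conj[OF assms] by simp
qed

lemma alg0:
  fixes a d b e c :: complex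
  assumes "2 * c = 1"
  shows "(a*b+d*e - c*(a+d)*(b+e))^2 - (a*a+d*d-c*(a+d)*(a+d))*(b*b+e*e-c*(b+e)*(b+e)) = 0"
  using assms by algebra

lemma alg:
  fixes a d b e :: complex
  shows "(a*b+d*e - 1/2*(a+d)*(b+e))^2 - (a*a+d*d-1/2*(a+d)*(a+d))*(b*b+e*e-1/2*(b+e)*(b+e)) = 0"
  using alg0[of "1/2"] by simp

lemma upper_sigma:
  fixes M N :: mat2
  assumes "upper_tri2 M" "upper_tri2 N"
  shows "(mtr (M ** N) - 1/2 * mtr M * mtr N)^2
     - (mtr (M ** M) - 1/2 * mtr M * mtr M) * (mtr (N ** N) - 1/2 * mtr N * mtr N) = 0"
proof -
  have m: "M $ 2 $ 1 = 0" and n: "N $ 2 $ 1 = 0" using assms by (auto simp: upper_tri2_def)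
  have tM: "mtr M = M$1$1 + M$2$2" and tN: "mtr N = N$1$1 + N$2$2" by (simp_all add: mtr_def sum_2)
  have tMN: "mtr (M ** N) = M$1$1 * N$1$1 + M$2$2 * N$2$2"
    using m n by (simp add: mtr_def sum_2 matrix_matrix_mult_def)
  have tMM: "mtr (M ** M) = M$1$1 * M$1$1 + M$2$2 * M$2$2"
    using m by (simp add: mtr_def sum_2 matrix_matrix_mult_def)
  have tNN: "mtr (N ** N) = N$1$1 * N$1$1 + N$2$2 * N$2$2"
    using n by (simp add: mtr_def sum_2 matrix_matrix_mult_def)
  show ?thesis unfolding tM tN tMN tMM tNN
    by (rule alg)
qed

theorem proposition2p5:
  fixes n :: nat and A :: "nat \<Rightarrow> complex^2^2"
  assumes "n \<ge> 2"
    and "\<exists>B. upper_triangular_tuple n B \<and> similar_tuple n A B"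
  shows "\<forall>j\<in>{1..n}. \<forall>k\<in>{1..n}. j \<noteq> k \<longrightarrow> sigma A j k = 0"
proof (intro ballI impI)
  fix j k assume j: "j \<in> {1..n}" and k: "k \<in> {1..n}" and "j \<noteq> k"
  obtain B g where ut: "upper_triangular_tuple n B" and g: "invertible g"
    and eq: "\<forall>j\<in>{1..n}. B j = g ** A j ** matrix_inv g"
    using assms(2) unfolding similar_tuple_def by blast
  have c1: "mtr (A i) = mtr (B i)" if "i \<in> {1..n}" for i
    using eq that mtr_conj[OF g] by simp
  have c2: "mtr (A i ** A l) = mtr (B i ** B l)" if "i \<in> {1..n}" "l \<in> {1..n}" for i l
    using eq that mtr_conj2[OF g] by simp
  have "sigma A j k = (mtr (B j ** B k) - 1/2 * mtr (B j) * mtr (B k))^2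
     - (mtr (B j ** B j) - 1/2 * mtr (B j) * mtr (B j)) * (mtr (B k ** B k) - 1/2 * mtr (B k) * mtr (B k))"
    unfolding sigma_def tau_def t1_def t2_def c1[OF j] c1[OF k] c2[OF j k] c2[OF j j] c2[OF k k] by (rule refl)
  also have "\<dots> = 0"
    using ut j k by (intro upper_sigma) (auto simp: upper_triangular_tuple_def)
  finally show "sigma A j k = 0" .
qed

end
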